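(* Let $f=f(x_1,\ldots,x_n)$ be a positive non-canalyzing Boolean function such that for every $j\in[n]$ both restrictions $f_{|x_j=0}$ and $f_{|x_j=1}$ are canalyzing. Let $\mathbf{y}$ be a minimal one of $f$ of Hamming weight $2$ such that $\overline{\mathbf{y}}$ is a maximal zero of $f$, let $i,s$ be the two coordinates where $\mathbf{y}$ equals $1$, and let $f_0=f_{|x_i=0}$, $f_1=f_{|x_i=1}$. Then: (a) $x_s$ is relevant for both $f_0$ and $f_1$; (b) for $\alpha_i\in\{0,1\}$, if $(\alpha_1,\ldots,\alpha_{i-1},\alpha_{i+1},\ldots,\alpha_n)\in B^{n-1}$ is an extremal point of $f_{\alpha_i}$, then $(\alpha_1,\ldots,\alpha_{i-1},\alpha_i,\alpha_{i+1},\ldots,\alpha_n)\in B^n$ is an extremal point of $f$.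
   Context: $B=\{0,1\}$, $\preceq$ coordinatewise order; $\overline{\mathbf{y}}$ is the complement of $\mathbf{y}$. $f$ is positive if $f(\mathbf{x})=1$ and $\mathbf{x}\preceq\mathbf{y}$ imply $f(\mathbf{y})=1$. Maximal zeros / minimal ones are $\preceq$-maximal false / $\preceq$-minimal true points; extremal points are both. $f_{|x_i=\alpha}$ is the function of the other $n-1$ variables obtained by fixing $x_i=\alpha$. A variable $x_k$ is relevant for $g$ if $g_{|x_k=0}\not\equiv g_{|x_k=1}$. $f$ is canalyzing if for some $i$, $f_{|x_i=0}$ or $f_{|x_i=1}$ is constant. *)

theory Defs
  imports Main
begin

text \<open>Boolean functions of arity n are modelled as predicates on bool lists;
  only arguments of length n matter. Coordinates are 0-based: x_1..x_n
  correspond to list positions 0..n-1. False < True is the order on B.\<close>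

definition pts :: "nat \<Rightarrow> bool list set" where
  "pts n = {x. length x = n}"

definition leqv :: "bool list \<Rightarrow> bool list \<Rightarrow> bool" where
  "leqv x y \<longleftrightarrow> list_all2 (\<le>) x y"

definition compl :: "bool list \<Rightarrow> bool list" where
  "compl y = map Not y"

definition hweight :: "bool list \<Rightarrow> nat" where
  "hweight x = count_list x True"

definition positive_fun :: "nat \<Rightarrow> (bool list \<Rightarrow> bool) \<Rightarrow> bool" where
  "positive_fun n f \<longleftrightarrow>
     (\<forall>x\<in>pts n. \<forall>y\<in>pts n. f x \<and> leqv x y \<longrightarrow> f y)"

definition max_zero :: "nat \<Rightarrow> (bool list \<Rightarrow> bool) \<Rightarrow> bool list \<Rightarrow> bool" where
  "max_zero n f x \<longleftrightarrow> x \<in> pts n \<and> \<not> f x \<and>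
     (\<forall>y\<in>pts n. leqv x y \<and> y \<noteq> x \<longrightarrow> f y)"

definition min_one :: "nat \<Rightarrow> (bool list \<Rightarrow> bool) \<Rightarrow> bool list \<Rightarrow> bool" where
  "min_one n f x \<longleftrightarrow> x \<in> pts n \<and> f x \<and>
     (\<forall>y\<in>pts n. leqv y x \<and> y \<noteq> x \<longrightarrow> \<not> f y)"

definition extremal :: "nat \<Rightarrow> (bool list \<Rightarrow> bool) \<Rightarrow> bool list \<Rightarrow> bool" where
  "extremal n f x \<longleftrightarrow> max_zero n f x \<or> min_one n f x"

definition restr :: "(bool list \<Rightarrow> bool) \<Rightarrow> nat \<Rightarrow> bool \<Rightarrow> (bool list \<Rightarrow> bool)" where
  "restr f i a = (\<lambda>xs. f (take i xs @ a # drop i xs))"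

definition const_fun :: "nat \<Rightarrow> (bool list \<Rightarrow> bool) \<Rightarrow> bool" where
  "const_fun n g \<longleftrightarrow> (\<forall>x\<in>pts n. \<forall>y\<in>pts n. g x = g y)"

definition canalyzing :: "nat \<Rightarrow> (bool list \<Rightarrow> bool) \<Rightarrow> bool" where
  "canalyzing n f \<longleftrightarrow>
     (\<exists>i<n. const_fun (n - 1) (restr f i False) \<or> const_fun (n - 1) (restr f i True))"

definition relevant :: "nat \<Rightarrow> (bool list \<Rightarrow> bool) \<Rightarrow> nat \<Rightarrow> bool" where
  "relevant n g k \<longleftrightarrow> k < n \<and>
     (\<exists>x\<in>pts (n - 1). restr g k False x \<noteq> restr g k True x)"

end

theory Submission
  imports Defs
begin

definition ins :: "nat \<Rightarrow> bool list \<Rightarrow> bool \<Rightarrow> bool list" where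
  "ins i a c = take i a @ c # drop i a"

lemma count_list_filter: "count_list xs x = length (filter ((=) x) xs)"
  by (induction xs) auto

lemma leqv_nth: "leqv x z \<longleftrightarrow> length x = length z \<and> (\<forall>k<length x. x!k \<longrightarrow> z!k)"
  unfolding leqv_def list_all2_conv_all_nth by (auto simp: le_bool_def)

lemma ins_len[simp]: "i \<le> length a \<Longrightarrow> length (ins i a c) = Suc (length a)"
  unfolding ins_def by simp

lemma ins_nth: "i \<le> length a \<Longrightarrow> ins i a c ! k = (if k < i then a!k else if k = i then c else a!(k-1))"
  unfolding ins_def
  by (auto simp: nth_append min_def nth_Cons' not_less)

lemma ins_eq: "i \<le> length a \<Longrightarrow> length a = length b \<Longrightarrow> ins i a c = ins i b d \<longleftrightarrow> a = b \<and> c = d"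
proof
  assume h: "i \<le> length a" "length a = length b" and e: "ins i a c = ins i b d"
  have "\<forall>k < Suc (length a). ins i a c ! k = ins i b d ! k" using e by simp
  hence 1: "\<forall>k < Suc (length a). (if k < i then a!k else if k = i then c else a!(k-1)) =
         (if k < i then b!k else if k = i then d else b!(k-1))"
    using h by (simp add: ins_nth)
  have "c = d" using 1[rule_format, of i] h by simp
  moreover have "a = b"
  proof (rule nth_equalityI)
    show "length a = length b" using h by simp
    fix k assume k: "k < length a"
    show "a!k = b!k"
    proof (cases "k < i")
      case True thus ?thesis using 1[rule_format, of k] k by simp
    next
      case False thus ?thesis using 1[rule_format, of "Suc k"] k by simp
    qed
  qed
  ultimately show "a = b \<and> c = d" by simp
qed auto

lemma ins_leqv: "i \<le> length a \<Longrightarrow> length a = length b \<Longrightarrow> leqv (ins i a c) (ins i b d) \<longleftrightarrow> leqv a b \<and> (c \<longrightarrow> d)"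
proof
  assume h: "i \<le> length a" "length a = length b" and e: "leqv (ins i a c) (ins i b d)"
  have 1: "\<forall>k < Suc (length a). (if k < i then a!k else if k = i then c else a!(k-1)) \<longrightarrow>
         (if k < i then b!k else if k = i then d else b!(k-1))"
    using e h by (simp add: ins_nth leqv_nth)
  have "c \<longrightarrow> d" using 1[rule_format, of i] h by simp
  moreover have "leqv a b"
    unfolding leqv_nth
  proof (intro conjI allI impI)
    show "length a = length b" using h by simp
    fix k assume k: "k < length a" "a!k"
    show "b!k"
    proof (cases "k < i")
      case True thus ?thesis using 1[rule_format, of k] k by simp
    next
      case False thus ?thesis using 1[rule_format, of "Suc k"] k by simp
    qed
  qed
  ultimately show "leqv a b \<and> (c \<longrightarrow> d)" by simp
next
  assume h: "i \<le> length a" "length a = length b" and e: "leqv a b \<and> (c \<longrightarrow> d)"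
  show "leqv (ins i a c) (ins i b d)" unfolding leqv_nth
    using h e by (auto simp: ins_nth leqv_nth)
qed

lemma ins_surj: "i < length z \<Longrightarrow> z = ins i (take i z @ drop (Suc i) z) (z!i)"
  unfolding ins_def using id_take_nth_drop[of i z] by (simp add: min_def)

lemma ins_decomp: "z \<in> pts n \<Longrightarrow> i < n \<Longrightarrow> z!i = c \<Longrightarrow> \<exists>b\<in>pts (n-1). z = ins i b c"
  unfolding pts_def using ins_surj[of i z] by (intro bexI[of _ "take i z @ drop (Suc i) z"]) auto

lemma posD: "positive_fun n f \<Longrightarrow> x \<in> pts n \<Longrightarrow> z \<in> pts n \<Longrightarrow> f x \<Longrightarrow> leqv x z \<Longrightarrow> f z"
  unfolding positive_fun_def by blast

lemma weight2:
  assumes "hweight y = 2" "i < length y" "s < length y" "i \<noteq> s" "y!i" "y!s" "k < length y"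
  shows "y!k \<longleftrightarrow> k = i \<or> k = s"
proof -
  have c: "card {k. k < length y \<and> y!k} = 2"
    using assms(1) unfolding hweight_def count_list_filter length_filter_conv_card by simp
  have "{i, s} = {k. k < length y \<and> y!k}"
    by (rule card_subset_eq) (use assms c in auto)
  thus ?thesis using assms(7) by blast
qed

lemma claimP:
  assumes pos: "positive_fun n f" and ymin: "min_one n f y" and ycmax: "max_zero n f (compl y)"
    and w: "\<forall>k<n. y!k \<longleftrightarrow> k = i \<or> k = s"
    and "i < n" "s < n" "i \<noteq> s"
    and x: "x \<in> pts n" "\<not> x!i" "\<not> f x"
    and fl: "\<forall>q<n. q \<noteq> i \<and> \<not> x!q \<longrightarrow> f (x[q := True])"
  shows "f (x[i := True])"
proof -
  have ly: "length y = n" "length x = n" using ymin x unfolding min_one_def pts_def by auto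
  show ?thesis
  proof (cases "x!s")
    case True
    have "leqv y (x[i:=True])" unfolding leqv_nth using ly w True assms(5-7)
      by (auto simp: nth_list_update)
    thus ?thesis using posD[OF pos, of y] ymin x unfolding min_one_def pts_def by auto
  next
    case False
    show ?thesis
    proof (cases "\<exists>q<n. q \<noteq> i \<and> q \<noteq> s \<and> \<not> x!q")
      case True
      then obtain q where q: "q<n" "q \<noteq> i" "q \<noteq> s" "\<not> x!q" by blast
      have "leqv (x[q:=True]) (compl y)" unfolding leqv_nth compl_def using ly w False q x(2)
        by (auto simp: nth_list_update)
      moreover have "f (x[q:=True])" using fl q by auto
      ultimately have "f (compl y)" using posD[OF pos, of "x[q:=True]" "compl y"] x ly
        unfolding pts_def compl_def by auto
      thus ?thesis using ycmax unfolding max_zero_def by auto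
    next
      case nq: False
      let ?z = "(compl y)[i:=True]"
      have lc: "length (compl y) = n" using ly by (simp add: compl_def)
      have zp: "?z \<in> pts n" using lc by (simp add: pts_def)
      have zl: "leqv (compl y) ?z" unfolding leqv_nth using lc
        by (metis length_list_update nth_list_update_eq nth_list_update_neq)
      have "?z ! i \<noteq> compl y ! i" using lc assms(5) w by (simp add: compl_def)
      hence zne: "?z \<noteq> compl y" by metis
      have fz: "f ?z" using ycmax zp zl zne unfolding max_zero_def by blast
      have "leqv ?z (x[i:=True])" unfolding leqv_nth
      proof (intro conjI allI impI)
        show "length ?z = length (x[i:=True])" using lc ly by simp
        fix k assume k: "k < length ?z" "?z ! k"
        show "x[i:=True] ! k"
        proof (cases "k = i")
          case True thus ?thesis using k lc ly by simp
        next
          case ki: False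
          hence "\<not> y ! k" using k lc by (simp add: compl_def)
          hence "k \<noteq> s" "k < n" using w k lc assms(6) by auto
          hence "x!k" using nq ki by blast
          thus ?thesis using ki by simp
        qed
      qed
      thus ?thesis using posD[OF pos zp _ fz] ly by (simp add: pts_def)
    qed
  qed
qed

lemma claimQ:
  assumes pos: "positive_fun n f" and ymin: "min_one n f y" and ycmax: "max_zero n f (compl y)"
    and w: "\<forall>k<n. y!k \<longleftrightarrow> k = i \<or> k = s"
    and "i < n" "s < n" "i \<noteq> s"
    and x: "x \<in> pts n" "x!i" "f x"
    and fl: "\<forall>q<n. q \<noteq> i \<and> x!q \<longrightarrow> \<not> f (x[q := False])"
  shows "\<not> f (x[i := False])"
proof -
  have ly: "length y = n" "length x = n" using ymin x unfolding min_one_def pts_def by auto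
  have lc: "length (compl y) = n" using ly by (simp add: compl_def)
  show ?thesis
  proof (cases "x!s")
    case False
    have "leqv (x[i:=False]) (compl y)" unfolding leqv_nth
    proof (intro conjI allI impI)
      show "length (x[i:=False]) = length (compl y)" using lc ly by simp
      fix k assume k: "k < length (x[i:=False])" "x[i:=False] ! k"
      hence "k \<noteq> i" by auto
      hence "x!k" using k by auto
      hence "k \<noteq> s" using False by blast
      hence "\<not> y!k" using w \<open>k \<noteq> i\<close> k ly by simp
      thus "compl y ! k" using k ly by (simp add: compl_def)
    qed
    moreover have "compl y \<in> pts n" "\<not> f (compl y)" using ycmax unfolding max_zero_def by auto
    moreover have "x[i:=False] \<in> pts n" using ly by (simp add: pts_def)
    ultimately show ?thesis using posD[OF pos] by blast
  next
    case True
    show ?thesis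
    proof (cases "\<exists>q<n. q \<noteq> i \<and> q \<noteq> s \<and> x!q")
      case True
      then obtain q where q: "q<n" "q \<noteq> i" "q \<noteq> s" "x!q" by blast
      have "leqv y (x[q:=False])" unfolding leqv_nth
      proof (intro conjI allI impI)
        show "length y = length (x[q:=False])" using ly by simp
        fix k assume k: "k < length y" "y!k"
        hence "k = i \<or> k = s" using w ly by simp
        thus "x[q:=False] ! k" using q x(2) \<open>x!s\<close> by auto
      qed
      moreover have "y \<in> pts n" "f y" using ymin unfolding min_one_def by auto
      moreover have "x[q:=False] \<in> pts n" using ly by (simp add: pts_def)
      ultimately have "f (x[q:=False])" using posD[OF pos] by blast
      thus ?thesis using fl q by auto
    next
      case nq: False
      let ?z = "y[i:=False]"
      have zp: "?z \<in> pts n" using ly by (simp add: pts_def)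
      have zl: "leqv ?z y" unfolding leqv_nth using ly
        by (metis length_list_update nth_list_update_eq nth_list_update_neq)
      have "?z ! i \<noteq> y ! i" using ly assms(5) w by simp
      hence zne: "?z \<noteq> y" by metis
      have fz: "\<not> f ?z" using ymin zp zl zne unfolding min_one_def by blast
      have "leqv (x[i:=False]) ?z" unfolding leqv_nth
      proof (intro conjI allI impI)
        show "length (x[i:=False]) = length ?z" using ly by simp
        fix k assume k: "k < length (x[i:=False])" "x[i:=False] ! k"
        hence ki: "k \<noteq> i" by auto
        hence "x!k" using k by auto
        hence "k = s" using nq ki k ly by auto
        thus "?z ! k" using ki w assms(6) by simp
      qed
      moreover have "x[i:=False] \<in> pts n" using ly by (simp add: pts_def)
      ultimately show ?thesis using posD[OF pos _ zp] fz by blast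
    qed
  qed
qed

lemma ins_rep: "j \<le> m \<Longrightarrow> k < Suc m \<Longrightarrow> ins j (replicate m d) b ! k = (if k = j then b else d)"
  by (simp add: ins_nth)

lemma dbl0:
  assumes "i < n" "s < n" "i \<noteq> s" and sd: "s' = (if s < i then s else s - 1)"
  shows "ins i (ins s' (replicate (n-2) d) b) c
       = map (\<lambda>k. if k = i then c else if k = s then b else d) [0..<n]"
proof (rule nth_equalityI)
  have s': "s' \<le> n - 2" using assms by auto
  have l1: "length (ins s' (replicate (n-2) d) b) = n - 1"
    using assms s' by (subst ins_len) auto
  show "length (ins i (ins s' (replicate (n-2) d) b) c) =
        length (map (\<lambda>k. if k = i then c else if k = s then b else d) [0..<n])"
    using assms l1 by (subst ins_len) auto
  fix k assume k: "k < length (ins i (ins s' (replicate (n-2) d) b) c)"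
  hence kn: "k < n" using assms l1 by (subst (asm) ins_len) auto
  have A: "ins i (ins s' (replicate (n-2) d) b) c ! k =
      (if k < i then ins s' (replicate (n-2) d) b ! k else if k = i then c else ins s' (replicate (n-2) d) b ! (k-1))"
    using l1 assms by (simp add: ins_nth)
  have B: "m < n - 1 \<Longrightarrow> ins s' (replicate (n-2) d) b ! m = (if m = s' then b else d)" for m
    using assms s' by (intro ins_rep) auto
  show "ins i (ins s' (replicate (n-2) d) b) c ! k =
        map (\<lambda>k. if k = i then c else if k = s then b else d) [0..<n] ! k"
  proof (cases "k < i")
    case True
    hence "k < n - 1" using assms by auto
    moreover have "k = s' \<longleftrightarrow> k = s" using sd True assms by auto
    ultimately show ?thesis using True kn assms(1-3) by (simp add: A B)
  next
    case False
    show ?thesis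
    proof (cases "k = i")
      case True show ?thesis by (subst A) (use True kn in simp)
    next
      case ne: False
      hence "k - 1 < n - 1" using False kn by auto
      moreover have "k - 1 = s' \<longleftrightarrow> k = s" using sd False ne assms by auto
      ultimately show ?thesis using False ne kn assms(1-3) by (simp add: A B)
    qed
  qed
qed

lemma dbl:
  assumes "i < n" "s < n" "i \<noteq> s"
  shows "ins i (ins (if s < i then s else s - 1) (replicate (n-2) d) b) c
       = map (\<lambda>k. if k = i then c else if k = s then b else d) [0..<n]"
  using dbl0[OF assms refl] .

lemma restr_ins: "restr g k c x = g (ins k x c)" by (simp add: restr_def ins_def)

theorem mainTheorem7:
  fixes n :: nat and f :: "bool list \<Rightarrow> bool" and y :: "bool list" and i s :: nat
  assumes pos: "positive_fun n f"
    and noncan: "\<not> canalyzing n f"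
    and rcan: "\<forall>j<n. canalyzing (n - 1) (restr f j False) \<and> canalyzing (n - 1) (restr f j True)"
    and ymin: "min_one n f y"
    and yw: "hweight y = 2"
    and ycmax: "max_zero n f (compl y)"
    and "i < n" and "s < n" and "i \<noteq> s" and "y ! i" and "y ! s"
  shows "relevant (n - 1) (restr f i False) (if s < i then s else s - 1)
       \<and> relevant (n - 1) (restr f i True) (if s < i then s else s - 1)
       \<and> (\<forall>ai a. a \<in> pts (n - 1) \<and> extremal (n - 1) (restr f i ai) a
                 \<longrightarrow> extremal n f (take i a @ ai # drop i a))"
proof -
  have ly: "length y = n" using ymin by (simp add: min_one_def pts_def)
  have w: "\<forall>k<n. y!k \<longleftrightarrow> k = i \<or> k = s"
  proof (intro allI impI)
    fix k assume "k < n"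
    thus "y!k \<longleftrightarrow> k = i \<or> k = s"
      using weight2[OF yw, of i s k] ly assms(7-11) by simp
  qed
  let ?s' = "if s < i then s else s - 1"
  have s'lt: "?s' < n - 1" using assms(7-9) by auto
  have yeq: "y = map (\<lambda>k. if k = i then True else if k = s then True else False) [0..<n]"
    by (rule nth_equalityI) (use ly w in auto)
  have ceq: "compl y = map (\<lambda>k. if k = i then False else if k = s then False else True) [0..<n]"
    by (rule nth_equalityI) (use ly w in \<open>auto simp: compl_def\<close>)
  have f00: "\<not> f (map (\<lambda>k. if k = i then False else if k = s then False else True) [0..<n])"
    using ycmax ceq by (simp add: max_zero_def)
  have f11: "f (map (\<lambda>k. if k = i then True else if k = s then True else False) [0..<n])"
    using ymin yeq by (simp add: min_one_def)
  have f01: "f (map (\<lambda>k. if k = i then False else if k = s then True else True) [0..<n])"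
  proof -
    let ?z = "map (\<lambda>k. if k = i then False else if k = s then True else True) [0..<n]"
    have "?z \<in> pts n" by (simp add: pts_def)
    moreover have "leqv (compl y) ?z" unfolding ceq leqv_nth by auto
    moreover have "?z ! s \<noteq> compl y ! s" using assms(7-9) by (simp add: ceq)
    hence "?z \<noteq> compl y" by metis
    ultimately show ?thesis using ycmax by (simp add: max_zero_def)
  qed
  have f10: "\<not> f (map (\<lambda>k. if k = i then True else if k = s then False else False) [0..<n])"
  proof -
    let ?z = "map (\<lambda>k. if k = i then True else if k = s then False else False) [0..<n]"
    have "?z \<in> pts n" by (simp add: pts_def)
    moreover have "leqv ?z y" unfolding yeq leqv_nth by auto
    moreover have "?z ! s \<noteq> y ! s" using assms(7-9) by (simp add: yeq)
    hence "?z \<noteq> y" by metis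
    ultimately show ?thesis using ymin by (simp add: min_one_def)
  qed
  have rp: "replicate (n-2) d \<in> pts (n - 1 - 1)" for d by (simp add: pts_def)
  have rel0: "relevant (n - 1) (restr f i False) ?s'"
    unfolding relevant_def
  proof (intro conjI bexI)
    show "?s' < n - 1" by (rule s'lt)
    show "restr (restr f i False) ?s' False (replicate (n-2) True) \<noteq> restr (restr f i False) ?s' True (replicate (n-2) True)"
      unfolding restr_ins dbl[OF assms(7-9)] using f00 f01 by simp
  qed (rule rp)
  have rel1: "relevant (n - 1) (restr f i True) ?s'"
    unfolding relevant_def
  proof (intro conjI bexI)
    show "?s' < n - 1" by (rule s'lt)
    show "restr (restr f i True) ?s' False (replicate (n-2) False) \<noteq> restr (restr f i True) ?s' True (replicate (n-2) False)"
      unfolding restr_ins dbl[OF assms(7-9)] using f10 f11 by simp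
  qed (rule rp)
  have partb: "extremal n f (ins i a ai)" if a: "a \<in> pts (n-1)" and ex: "extremal (n-1) (restr f i ai) a" for ai a
  proof -
    have la: "length a = n - 1" "i \<le> length a" using a assms(7) by (auto simp: pts_def)
    let ?x = "ins i a ai"
    have lx: "length ?x = n" using la assms(7) by simp
    have xp: "?x \<in> pts n" using lx by (simp add: pts_def)
    have xi: "?x ! i = ai" using la by (simp add: ins_nth)
    have fx: "f ?x = restr f i ai a" by (simp add: restr_ins)
    have dec: "\<exists>b\<in>pts (n-1). z = ins i b ai" if "z \<in> pts n" "z ! i = ai" for z
      using ins_decomp[OF that(1) assms(7) that(2)] .
    have lab: "length a = length b" if "b \<in> pts (n-1)" for b
      using la that by (simp add: pts_def)
    have lba: "i \<le> length b" "length b = length a" if "b \<in> pts (n-1)" for b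
      using la that by (auto simp: pts_def)
    have lv: "leqv ?x (ins i b ai) = leqv a b" if "b \<in> pts (n-1)" for b
      using ins_leqv[OF la(2) lab[OF that], of ai ai] by simp
    have lv2: "leqv (ins i b ai) ?x = leqv b a" if "b \<in> pts (n-1)" for b
      using ins_leqv[OF lba[OF that], of ai ai] by simp
    have eqv: "(ins i b ai = ?x) = (b = a)" if "b \<in> pts (n-1)" for b
      using ins_eq[OF lba[OF that], of ai ai] by simp
    from ex consider (mz) "max_zero (n-1) (restr f i ai) a" | (mo) "min_one (n-1) (restr f i ai) a"
      unfolding extremal_def by blast
    then show ?thesis
    proof cases
      case mz
      have up: "f z" if zz: "z \<in> pts n" "z ! i = ai" "leqv ?x z" "z \<noteq> ?x" for z
      proof -
        obtain b where b: "b \<in> pts (n-1)" "z = ins i b ai" using dec zz(1,2) by blast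
        have "leqv a b" "b \<noteq> a" using lv[OF b(1)] eqv[OF b(1)] b(2) zz(3,4) by auto
        thus ?thesis using mz b unfolding max_zero_def restr_ins by blast
      qed
      have nfx: "\<not> f ?x" using mz fx by (simp add: max_zero_def)
      have "max_zero n f ?x" unfolding max_zero_def
      proof (intro conjI ballI impI)
        show "?x \<in> pts n" by (rule xp)
        show "\<not> f ?x" by (rule nfx)
        fix z assume z: "z \<in> pts n" "leqv ?x z \<and> z \<noteq> ?x"
        have lz: "length z = n" using z by (simp add: pts_def)
        show "f z"
        proof (cases "z ! i = ai")
          case True thus ?thesis using up z by blast
        next
          case False
          have "?x ! i \<longrightarrow> z ! i" using z lx assms(7) unfolding leqv_nth by auto
          hence ai: "\<not> ?x ! i" "z ! i" using False xi by auto
          have fl: "\<forall>q<n. q \<noteq> i \<and> \<not> ?x!q \<longrightarrow> f (?x[q:=True])"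
          proof (intro allI impI)
            fix q assume q: "q < n" "q \<noteq> i \<and> \<not> ?x!q"
            show "f (?x[q:=True])"
            proof (rule up)
              show "?x[q:=True] \<in> pts n" using lx by (simp add: pts_def)
              show "?x[q:=True] ! i = ai" using q xi by simp
              show "leqv ?x (?x[q:=True])" unfolding leqv_nth
                by (metis length_list_update nth_list_update_eq nth_list_update_neq)
              have "?x[q:=True] ! q \<noteq> ?x ! q" using q lx by simp
              thus "?x[q:=True] \<noteq> ?x" by metis
            qed
          qed
          have fxi: "f (?x[i:=True])"
            using claimP[OF pos ymin ycmax w assms(7-9) xp ai(1) nfx fl] .
          have "leqv (?x[i:=True]) z" unfolding leqv_nth
          proof (intro conjI allI impI)
            show "length (?x[i:=True]) = length z" using lx lz by simp
            fix k assume k: "k < length (?x[i:=True])" "?x[i:=True] ! k"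
            show "z ! k"
            proof (cases "k = i")
              case True thus ?thesis using ai by simp
            next
              case False
              hence "?x ! k" using k by simp
              thus ?thesis using z k unfolding leqv_nth by auto
            qed
          qed
          moreover have "?x[i:=True] \<in> pts n" using lx by (simp add: pts_def)
          ultimately show ?thesis using posD[OF pos _ z(1) fxi] by blast
        qed
      qed
      thus ?thesis by (simp add: extremal_def)
    next
      case mo
      have down: "\<not> f z" if zz: "z \<in> pts n" "z ! i = ai" "leqv z ?x" "z \<noteq> ?x" for z
      proof -
        obtain b where b: "b \<in> pts (n-1)" "z = ins i b ai" using dec zz(1,2) by blast
        have "leqv b a" "b \<noteq> a" using lv2[OF b(1)] eqv[OF b(1)] b(2) zz(3,4) by auto
        thus ?thesis using mo b unfolding min_one_def restr_ins by blast
      qed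
      have nfx: "f ?x" using mo fx by (simp add: min_one_def)
      have "min_one n f ?x" unfolding min_one_def
      proof (intro conjI ballI impI)
        show "?x \<in> pts n" by (rule xp)
        show "f ?x" by (rule nfx)
        fix z assume z: "z \<in> pts n" "leqv z ?x \<and> z \<noteq> ?x"
        have lz: "length z = n" using z by (simp add: pts_def)
        show "\<not> f z"
        proof (cases "z ! i = ai")
          case True thus ?thesis using down z by blast
        next
          case False
          have "z ! i \<longrightarrow> ?x ! i" using z lz assms(7) unfolding leqv_nth by auto
          hence ai: "?x ! i" "\<not> z ! i" using False xi by auto
          have fl: "\<forall>q<n. q \<noteq> i \<and> ?x!q \<longrightarrow> \<not> f (?x[q:=False])"
          proof (intro allI impI)
            fix q assume q: "q < n" "q \<noteq> i \<and> ?x!q"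
            show "\<not> f (?x[q:=False])"
            proof (rule down)
              show "?x[q:=False] \<in> pts n" using lx by (simp add: pts_def)
              show "?x[q:=False] ! i = ai" using q xi by simp
              show "leqv (?x[q:=False]) ?x" unfolding leqv_nth
                by (metis length_list_update nth_list_update_eq nth_list_update_neq)
              have "?x[q:=False] ! q \<noteq> ?x ! q" using q lx by simp
              thus "?x[q:=False] \<noteq> ?x" by metis
            qed
          qed
          have fxi: "\<not> f (?x[i:=False])"
            using claimQ[OF pos ymin ycmax w assms(7-9) xp ai(1) nfx fl] .
          have "leqv z (?x[i:=False])" unfolding leqv_nth
          proof (intro conjI allI impI)
            show "length z = length (?x[i:=False])" using lx lz by simp
            fix k assume k: "k < length z" "z ! k"
            have ki: "k \<noteq> i" using k ai by metis
            have "?x ! k" using z k unfolding leqv_nth by auto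
            thus "?x[i:=False] ! k" using ki by simp
          qed
          moreover have "?x[i:=False] \<in> pts n" using lx by (simp add: pts_def)
          ultimately show ?thesis using posD[OF pos z(1) _ _] fxi by blast
        qed
      qed
      thus ?thesis by (simp add: extremal_def)
    qed
  qed
  have "\<forall>ai a. a \<in> pts (n - 1) \<and> extremal (n - 1) (restr f i ai) a
                 \<longrightarrow> extremal n f (take i a @ ai # drop i a)"
  proof (intro allI impI)
    fix ai a assume h: "a \<in> pts (n - 1) \<and> extremal (n - 1) (restr f i ai) a"
    have "extremal n f (ins i a ai)" using partb h by blast
    thus "extremal n f (take i a @ ai # drop i a)" by (simp only: ins_def)
  qed
  thus ?thesis using rel0 rel1 by blast
qed

end
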